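(* Let $t$ be the total number of attribute values. The Depth-First Search Sampling algorithm (stack initialized with a matching starting context $C_V$; repeatedly take the top context $C$, mark it visited, compute the matching unvisited contexts connected to $C$, pop if there are none, otherwise push the one selected by $\mathrm{Exp}^{\epsilon_1}_u$; stop after $n$ contexts are visited or the stack is empty; output $\mathrm{Exp}^{\epsilon_1}_u$ applied to the visited contexts) has computational complexity $\mathcal O(t)$.
   Context: Dataset $D$ over categorical attributes $A_1,\dots,A_m$ with domain sizes $|A_i|$, $t=\sum_i|A_i|$. A context is a binary vector of length $t$ selecting a subset of values per attribute; $D_C$ is its population in $D$. Two contexts are connected if their Hamming distance is $1$ (each context has $t$ connected contexts). A context $C$ is matching if $f_M(D_C,V)=\mathrm{true}$ for a deterministic outlier verification $f_M$ for record $V$ w.r.t. metric $M$. $\mathrm{Exp}^{\epsilon}_u$ is the Exponential mechanism selecting from a set with probability proportional to $\exp(\epsilon u/(2\Delta u))$. The number of samples $n$ is treated as a constant; complexity counts outlier-verification calls and mechanism evaluations. *)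

theory Defs
  imports Complex_Main "HOL-Library.While_Combinator"
begin

text \<open>Contexts are binary vectors of length t, represented as bool lists.
  Two contexts are connected iff their Hamming distance is 1, i.e. one is obtained
  from the other by flipping exactly one bit.\<close>

type_synonym ctxt = "bool list"

definition flip :: "ctxt \<Rightarrow> nat \<Rightarrow> ctxt" where
  "flip C i = C[i := (\<not> C ! i)]"

definition connected :: "ctxt \<Rightarrow> ctxt \<Rightarrow> bool" where
  "connected C C' \<longleftrightarrow> length C = length C' \<and>
     card {i. i < length C \<and> C ! i \<noteq> C' ! i} = 1"

text \<open>State of the DFS sampler: (stack (top = head), visited set, cost counter).
  The cost counter counts outlier-verification calls (calls of the matching
  predicate) and evaluations of the Exponential mechanism.\<close>

type_synonym dfs_state = "ctxt list \<times> ctxt set \<times> nat"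

text \<open>The (randomized) Exponential mechanism is modelled by an arbitrary selection
  function sel, which may depend on the whole current state (stack, visited set) and
  receives the candidate set; quantifying over all such functions covers every
  possible run of the randomized algorithm.\<close>

definition dfs_cond :: "nat \<Rightarrow> dfs_state \<Rightarrow> bool" where
  "dfs_cond n s = (case s of (stk, vis, c) \<Rightarrow> stk \<noteq> [] \<and> card vis < n)"

definition dfs_step ::
  "(ctxt \<Rightarrow> bool) \<Rightarrow> (ctxt list \<Rightarrow> ctxt set \<Rightarrow> ctxt set \<Rightarrow> ctxt)
   \<Rightarrow> dfs_state \<Rightarrow> dfs_state" where
  "dfs_step match sel s = (case s of (stk, vis, c) \<Rightarrow>
     let C = hd stk;
         vis' = insert C vis;
         cands = {C'. connected C C' \<and> C' \<notin> vis' \<and> match C'};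
         calls = length (filter (\<lambda>i. flip C i \<notin> vis') [0..<length C])
     in if cands = {} then (tl stk, vis', c + calls)
        else (sel stk vis' cands # stk, vis', c + calls + 1))"

text \<open>Total cost of the algorithm: the loop, followed by one final evaluation of the
  Exponential mechanism on the visited contexts. None if the loop does not terminate.\<close>

definition dfs_cost ::
  "nat \<Rightarrow> (ctxt \<Rightarrow> bool) \<Rightarrow> (ctxt list \<Rightarrow> ctxt set \<Rightarrow> ctxt set \<Rightarrow> ctxt)
   \<Rightarrow> ctxt \<Rightarrow> nat option" where
  "dfs_cost n match sel CV =
     map_option (\<lambda>(stk, vis, c). c + 1)
       (while_option (dfs_cond n) (dfs_step match sel) ([CV], {}, 0))"

end

theory Submission
  imports Defs
begin

definition inv9 :: "nat \<Rightarrow> nat \<Rightarrow> dfs_state \<Rightarrow> bool" where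
  "inv9 n t s = (case s of (stk, vis, c) \<Rightarrow>
     (\<forall>x\<in>set stk. length x = t) \<and> set (tl stk) \<subseteq> vis \<and> finite vis \<and> card vis \<le> n \<and>
     c + (t+1) * length stk + (t+1) \<le> 2*(t+1) * card (vis \<union> set stk))"

definition mu9 :: "nat \<Rightarrow> dfs_state \<Rightarrow> nat" where
  "mu9 n s = (case s of (stk, vis, c) \<Rightarrow> 2 * (n + 1 - card (vis \<union> set stk)) + length stk)"

lemma finite_len: "finite {xs :: bool list. length xs = t}"
  using finite_lists_length_eq[of "UNIV :: bool set" t] by simp

lemma calls_le: "length (filter P [0..<length C]) \<le> length C"
  using length_filter_le[of P "[0..<length C]"] by simp

lemma lin1: "(c::nat) + X + (t+1) \<le> K \<Longrightarrow> X = P + (t+1) \<Longrightarrow> calls \<le> t \<Longrightarrow> c + calls + P + (t+1) \<le> K"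
  by arith

lemma lin2: "(c::nat) + X + (t+1) \<le> K \<Longrightarrow> Y = X + (t+1) \<Longrightarrow> K' = K + 2*(t+1) \<Longrightarrow> calls \<le> t \<Longrightarrow> c + calls + 1 + Y + (t+1) \<le> K'"
  by arith

lemma step9:
  assumes I: "inv9 n t (stk, vis, c)" and B: "dfs_cond n (stk, vis, c)"
    and sel: "\<forall>stk vis S. finite S \<and> S \<noteq> {} \<longrightarrow> sel stk vis S \<in> S"
  shows "inv9 n t (dfs_step match sel (stk, vis, c)) \<and>
         mu9 n (dfs_step match sel (stk, vis, c)) < mu9 n (stk, vis, c)"
proof -
  from B have ne: "stk \<noteq> []" and lt: "card vis < n" by (auto simp: dfs_cond_def)
  define C where "C = hd stk"
  define vis' where "vis' = insert C vis"
  define cands where "cands = {C'. connected C C' \<and> C' \<notin> vis' \<and> match C'}"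
  define calls where "calls = length (filter (\<lambda>i. flip C i \<notin> vis') [0..<length C])"
  have stkC: "stk = C # tl stk" using ne by (simp add: C_def)
  have lenall: "\<forall>x\<in>set stk. length x = t" and tlv: "set (tl stk) \<subseteq> vis" and fv: "finite vis"
    and cv: "card vis \<le> n"
    and pot: "c + (t+1) * length stk + (t+1) \<le> 2*(t+1) * card (vis \<union> set stk)"
    using I by (auto simp: inv9_def)
  have lenC: "length C = t" using lenall stkC by (metis list.set_intros(1))
  have callsle: "calls \<le> t" unfolding calls_def using calls_le lenC by metis
  have fv': "finite vis'" using fv by (simp add: vis'_def)
  have cv': "card vis' \<le> n" using lt fv by (simp add: vis'_def card_insert_if)
  have sC: "set stk = insert C (set (tl stk))" using stkC by (metis list.simps(15))
  have U: "vis \<union> set stk = vis'" using tlv sC by (auto simp: vis'_def)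
  have stepeq: "dfs_step match sel (stk, vis, c) =
     (if cands = {} then (tl stk, vis', c + calls)
        else (sel stk vis' cands # stk, vis', c + calls + 1))"
    by (simp add: dfs_step_def Let_def C_def vis'_def cands_def calls_def)
  have lenstk: "length stk = Suc (length (tl stk))" using ne by simp
  show ?thesis
  proof (cases "cands = {}")
    case True
    have U2: "vis' \<union> set (tl stk) = vis'" using tlv by (auto simp: vis'_def)
    have a1: "\<forall>x\<in>set (tl stk). length x = t" using lenall sC by simp
    have a2: "set (tl (tl stk)) \<subseteq> vis'" using tlv list.set_sel(2)[of "tl stk"]
      by (cases "tl stk = []") (auto simp: vis'_def)
    have e: "(t+1) * length stk = (t+1) * length (tl stk) + (t+1)" using lenstk by (simp only: mult_Suc_right)
    have a3: "c + calls + (t+1) * length (tl stk) + (t+1) \<le> 2*(t+1) * card (vis' \<union> set (tl stk))"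
    proof -
      have "card (vis' \<union> set (tl stk)) = card (vis \<union> set stk)" using U U2 by simp
      thus ?thesis using lin1[OF pot e callsle] by simp
    qed
    have "inv9 n t (tl stk, vis', c + calls)"
      unfolding inv9_def using a1 a2 a3 fv' cv' by simp
    moreover have "mu9 n (tl stk, vis', c + calls) < mu9 n (stk, vis, c)"
      unfolding mu9_def using U U2 lenstk by simp
    ultimately show ?thesis using True stepeq by simp
  next
    case False
    define x where "x = sel stk vis' cands"
    have fc: "finite cands"
      by (rule finite_subset[OF _ finite_len[of t]]) (auto simp: cands_def connected_def lenC)
    have xin: "x \<in> cands" using sel fc False by (simp add: x_def)
    hence xlen: "length x = t" and xnv: "x \<notin> vis'"
      by (auto simp: cands_def connected_def lenC)
    have U3: "vis' \<union> set (x # stk) = insert x vis'" using U by auto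
    have cx: "card (insert x vis') = Suc (card vis')" using xnv fv' by simp
    have b1: "\<forall>y\<in>set (x # stk). length y = t" using lenall xlen by simp
    have b2: "set (tl (x # stk)) \<subseteq> vis'" using U by auto
    have e: "(t+1) * length (x # stk) = (t+1) * length stk + (t+1)" by simp
    have e2: "2*(t+1) * card (vis' \<union> set (x # stk)) = 2*(t+1) * card (vis \<union> set stk) + 2*(t+1)"
      using U3 cx U by simp
    have b3: "c + calls + 1 + (t+1) * length (x # stk) + (t+1) \<le> 2*(t+1) * card (vis' \<union> set (x # stk))"
      using lin2[OF pot e e2 callsle] .
    have "inv9 n t (x # stk, vis', c + calls + 1)"
      unfolding inv9_def using b1 b2 b3 fv' cv' by simp
    moreover have "mu9 n (x # stk, vis', c + calls + 1) < mu9 n (stk, vis, c)"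
      unfolding mu9_def using U U3 cx cv' by simp
    ultimately show ?thesis using False stepeq by (simp add: x_def)
  qed
qed

theorem theorem9:
  fixes n :: nat
  shows "\<exists>c::real. \<forall>t::nat. t \<ge> 1 \<longrightarrow>
           (\<forall>match sel CV.
              length CV = t \<longrightarrow> match CV \<longrightarrow>
              (\<forall>stk vis S. finite S \<and> S \<noteq> {} \<longrightarrow> sel stk vis S \<in> S) \<longrightarrow>
              (\<exists>k. dfs_cost n match sel CV = Some k \<and> real k \<le> c * real t))"
proof (intro exI[of _ "4 * real n + 5"] allI impI)
  fix t :: nat and match :: "ctxt \<Rightarrow> bool" and sel :: "ctxt list \<Rightarrow> ctxt set \<Rightarrow> ctxt set \<Rightarrow> ctxt" and CV :: ctxt
  assume t1: "t \<ge> 1" and lCV: "length CV = t" and mCV: "match CV"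
    and sel: "\<forall>stk vis S. finite S \<and> S \<noteq> {} \<longrightarrow> sel stk vis S \<in> S"
  have init: "inv9 n t ([CV], {}, 0)" using lCV by (simp add: inv9_def)
  have st: "\<And>s. inv9 n t s \<Longrightarrow> dfs_cond n s \<Longrightarrow>
      inv9 n t (dfs_step match sel s) \<and> mu9 n (dfs_step match sel s) < mu9 n s"
    using step9 sel by (metis prod_cases3)
  obtain s where ws: "while_option (dfs_cond n) (dfs_step match sel) ([CV], {}, 0) = Some s"
    using measure_while_option_Some[of "inv9 n t" "dfs_cond n" "dfs_step match sel" "mu9 n", OF st init]
    by blast
  have Is: "inv9 n t s"
    using while_option_rule[of "inv9 n t" "dfs_cond n" "dfs_step match sel", OF _ ws init] st by blast
  obtain stk vis c where s: "s = (stk, vis, c)" by (metis prod_cases3)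
  have fv: "finite vis" and cv: "card vis \<le> n" and tlv: "set (tl stk) \<subseteq> vis"
    and pot: "c + (t+1) * length stk + (t+1) \<le> 2*(t+1) * card (vis \<union> set stk)"
    using Is by (auto simp: inv9_def s)
  have "vis \<union> set stk \<subseteq> insert (hd stk) vis" using tlv
    by (cases stk) auto
  hence "card (vis \<union> set stk) \<le> card (insert (hd stk) vis)"
    using fv by (intro card_mono) auto
  also have "\<dots> \<le> n + 1" using fv cv by (simp add: card_insert_if)
  finally have "c \<le> 2*(t+1)*(n+1)" using pot
    by (meson le_add1 le_trans mult_le_mono2 add_leD1)
  hence "real c \<le> real (2*(t+1)*(n+1))" by (simp only: of_nat_le_iff)
  hence "real c \<le> 2*(real t+1)*(real n+1)" by (simp add: algebra_simps)
  moreover have "dfs_cost n match sel CV = Some (c + 1)"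
    by (simp add: dfs_cost_def ws s)
  moreover have "2*(real t+1)*(real n+1) + 1 \<le> (4 * real n + 5) * real t"
  proof -
    have "real t \<ge> 1" using t1 by simp
    hence "2*(real t+1)*(real n+1) + 1 \<le> 2*(2*real t)*(real n+1) + real t"
      by (intro add_mono mult_right_mono mult_left_mono) auto
    also have "\<dots> = (4 * real n + 5) * real t" by (simp add: algebra_simps)
    finally show ?thesis .
  qed
  ultimately show "\<exists>k. dfs_cost n match sel CV = Some k \<and> real k \<le> (4 * real n + 5) * real t"
    by (intro exI[of _ "c+1"]) simp
qed

end
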